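(* There is an absolute constant $K>0$ such that the following holds. Let $n\ge2$, $V=\{0,1\}^n$, $\mu$ uniform on $V$, $\beta=\log_2(3/2)$, $\varepsilon>0$, and let $(A,B,W)$ be a partition of $V$ with $(1-\varepsilon)/2\le\mu(A)\le(1+\varepsilon)/2$, $\mu(W)\le\varepsilon n^{-\beta}$ and $|\nabla(A,B)|<(1+\varepsilon)2^{n-1}$. Then \[ |\{x\in A: h_{AB}(x)\neq 1\}|\le K\varepsilon |A| . \]
   Context: $V=\{0,1\}^n$ is the vertex set of the Hamming cube $Q_n$. $d_T(x)$ is the number of neighbors of $x$ in $T$. For disjoint $A,B$, $h_{AB}(x)=d_B(x)$ if $x\in A$ and $h_{AB}(x)=0$ otherwise. $\nabla(A,B)$ is the set of adjacent pairs $(x,y)$ with $x\in A$, $y\in B$. *)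

theory Defs
  imports Complex_Main
begin

definition cube :: "nat \<Rightarrow> bool list set" where
  "cube n = {x. length x = n}"

definition cube_adj :: "bool list \<Rightarrow> bool list \<Rightarrow> bool" where
  "cube_adj x y \<longleftrightarrow> length x = length y \<and> card {i. i < length x \<and> x ! i \<noteq> y ! i} = 1"

definition deg_in :: "bool list set \<Rightarrow> bool list \<Rightarrow> nat" where
  "deg_in T x = card {y \<in> T. cube_adj x y}"

definition h_AB :: "bool list set \<Rightarrow> bool list set \<Rightarrow> bool list \<Rightarrow> nat" where
  "h_AB A B x = (if x \<in> A then deg_in B x else 0)"

definition edge_boundary :: "bool list set \<Rightarrow> bool list set \<Rightarrow> (bool list \<times> bool list) set" where
  "edge_boundary A B = {(x, y). x \<in> A \<and> y \<in> B \<and> cube_adj x y}"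

definition mu :: "nat \<Rightarrow> bool list set \<Rightarrow> real" where
  "mu n S = real (card S) / 2 ^ n"

end

theory Submission
  imports Defs
begin


definition phi :: "nat \<Rightarrow> real" where
  "phi t = (if t = 0 then 0 else sqrt (2 * real t - 1))"

definition hb :: "nat \<Rightarrow> bool list set \<Rightarrow> bool list \<Rightarrow> nat" where
  "hb n A x = card {y \<in> cube n - A. cube_adj x y}"

definition sl :: "bool list set \<Rightarrow> bool \<Rightarrow> bool list set" where
  "sl A c = {x. c # x \<in> A}"

lemma finite_cube: "finite (cube n)"
proof -
  have "cube n = {xs. set xs \<subseteq> (UNIV::bool set) \<and> length xs = n}" by (auto simp: cube_def)
  then show ?thesis using finite_lists_length_eq[of "UNIV::bool set" n] by simp
qed

lemma card_cube: "card (cube n) = 2 ^ n"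
proof -
  have "cube n = {xs. set xs \<subseteq> (UNIV::bool set) \<and> length xs = n}" by (auto simp: cube_def)
  then show ?thesis using card_lists_length_eq[of "UNIV::bool set" n] by simp
qed

lemma diffset_Cons:
  "{i. i < length (c#x) \<and> (c#x)!i \<noteq> (d#y)!i} =
   (if c \<noteq> d then {0} else {}) \<union> Suc ` {i. i < length x \<and> x!i \<noteq> y!i}"
  apply (rule set_eqI)
  subgoal for i by (cases i) auto
  done

lemma card_diffset_Cons:
  "card {i. i < length (c#x) \<and> (c#x)!i \<noteq> (d#y)!i} =
   (if c \<noteq> d then 1 else 0) + card {i. i < length x \<and> x!i \<noteq> y!i}"
proof -
  have fin: "finite {i. i < length x \<and> x!i \<noteq> y!i}" by simp
  have "card ((if c \<noteq> d then {0} else {}) \<union> Suc ` {i. i < length x \<and> x!i \<noteq> y!i})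
        = card (if c \<noteq> d then {0::nat} else {}) + card (Suc ` {i. i < length x \<and> x!i \<noteq> y!i})"
    by (rule card_Un_disjoint) (use fin in auto)
  also have "card (Suc ` {i. i < length x \<and> x!i \<noteq> y!i}) = card {i. i < length x \<and> x!i \<noteq> y!i}"
    by (rule card_image) simp
  finally show ?thesis unfolding diffset_Cons by simp
qed

lemma diff0_iff:
  assumes "length x = length y"
  shows "card {i. i < length x \<and> x!i \<noteq> y!i} = 0 \<longleftrightarrow> x = y"
proof
  assume "card {i. i < length x \<and> x!i \<noteq> y!i} = 0"
  then have "{i. i < length x \<and> x!i \<noteq> y!i} = {}" by simp
  then show "x = y" using assms by (auto intro: nth_equalityI)
qed simp

lemma adj_Cons:
  assumes "length x = length y"
  shows "cube_adj (c#x) (d#y) \<longleftrightarrow> (c = d \<and> cube_adj x y) \<or> (c \<noteq> d \<and> x = y)"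
proof -
  define k where "k = card {i. i < length x \<and> x!i \<noteq> y!i}"
  have e: "cube_adj (c#x) (d#y) \<longleftrightarrow> (if c \<noteq> d then 1 else 0) + k = 1"
    unfolding cube_adj_def k_def using assms card_diffset_Cons[of c x d y] by simp
  have e2: "cube_adj x y \<longleftrightarrow> k = 1" unfolding cube_adj_def k_def using assms by simp
  have e3: "k = 0 \<longleftrightarrow> x = y" unfolding k_def using diff0_iff[OF assms] .
  show ?thesis
  proof (cases "c = d")
    case True then show ?thesis using e e2 by simp
  next
    case False then show ?thesis using e e3 by simp
  qed
qed

lemma adj_irrefl: "\<not> cube_adj x x"
  unfolding cube_adj_def by simp

lemma hb_set_Cons:
  assumes "x \<in> cube n"
  shows "{y \<in> cube (Suc n) - A. cube_adj (c#x) y} =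
    Cons c ` {y \<in> cube n - sl A c. cube_adj x y} \<union> (if x \<in> sl A (\<not>c) then {} else {(\<not>c)#x})"
proof (rule set_eqI)
  fix z
  show "z \<in> {y \<in> cube (Suc n) - A. cube_adj (c#x) y} \<longleftrightarrow>
    z \<in> Cons c ` {y \<in> cube n - sl A c. cube_adj x y} \<union> (if x \<in> sl A (\<not>c) then {} else {(\<not>c)#x})"
  proof (cases z)
    case Nil
    then show ?thesis by (auto simp: cube_def)
  next
    case (Cons d y)
    show ?thesis
    proof (cases "length y = n")
      case True
      then have ly: "length x = length y" using assms by (simp add: cube_def)
      show ?thesis using Cons True ly adj_Cons[OF ly, of c d] assms
        by (cases c; cases d) (auto simp: cube_def sl_def)
    next
      case False
      then show ?thesis using Cons assms by (auto simp: cube_def)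
    qed
  qed
qed

lemma hb_Cons:
  assumes "x \<in> cube n"
  shows "hb (Suc n) A (c#x) = hb n (sl A c) x + (if x \<in> sl A (\<not>c) then 0 else 1)"
proof -
  have fin: "finite {y \<in> cube n - sl A c. cube_adj x y}" using finite_cube by simp
  have "card (Cons c ` {y \<in> cube n - sl A c. cube_adj x y} \<union> (if x \<in> sl A (\<not>c) then {} else {(\<not>c)#x}))
     = card (Cons c ` {y \<in> cube n - sl A c. cube_adj x y}) + card (if x \<in> sl A (\<not>c) then {} else {(\<not>c)#x})"
    by (rule card_Un_disjoint) (use fin in auto)
  also have "card (Cons c ` {y \<in> cube n - sl A c. cube_adj x y}) = card {y \<in> cube n - sl A c. cube_adj x y}"
    by (rule card_image) simp
  finally show ?thesis unfolding hb_def hb_set_Cons[OF assms] by simp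
qed

lemma cube_Suc_split:
  assumes "A \<subseteq> cube (Suc n)"
  shows "A = Cons False ` sl A False \<union> Cons True ` sl A True"
proof (rule set_eqI)
  fix z show "z \<in> A \<longleftrightarrow> z \<in> Cons False ` sl A False \<union> Cons True ` sl A True"
  proof (cases z)
    case Nil then show ?thesis using assms by (auto simp: cube_def)
  next
    case (Cons d y) then show ?thesis by (cases d) (auto simp: sl_def)
  qed
qed

lemma sl_sub: "A \<subseteq> cube (Suc n) \<Longrightarrow> sl A c \<subseteq> cube n"
  by (auto simp: sl_def cube_def)

lemma sum_split:
  assumes "A \<subseteq> cube (Suc n)"
  shows "(\<Sum>z\<in>A. f z) = (\<Sum>x\<in>sl A False. f (False#x)) + (\<Sum>x\<in>sl A True. f (True#x))"
proof -
  have fin: "finite (sl A c)" for c using sl_sub[OF assms] finite_cube finite_subset by blast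
  have "(\<Sum>z\<in>A. f z) = (\<Sum>z\<in>Cons False ` sl A False \<union> Cons True ` sl A True. f z)"
    using cube_Suc_split[OF assms] by simp
  also have "\<dots> = (\<Sum>z\<in>Cons False ` sl A False. f z) + (\<Sum>z\<in>Cons True ` sl A True. f z)"
    by (rule sum.union_disjoint) (use fin in auto)
  also have "\<dots> = (\<Sum>x\<in>sl A False. f (False#x)) + (\<Sum>x\<in>sl A True. f (True#x))"
    by (simp add: sum.reindex)
  finally show ?thesis .
qed

lemma card_split:
  assumes "A \<subseteq> cube (Suc n)"
  shows "card A = card (sl A False) + card (sl A True)"
  using sum_split[OF assms, of "\<lambda>_. 1::nat"] by simp



lemma phi_nonneg: "0 \<le> phi t" by (simp add: phi_def)

lemma phi_Suc_sq: "t \<ge> 1 \<Longrightarrow> phi (Suc t) = sqrt ((phi t)^2 + 2)"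
  by (simp add: phi_def)

lemma phi_ge1: "t \<ge> 1 \<Longrightarrow> phi t \<ge> 1"
  by (simp add: phi_def)

lemma phi_mono1: "phi t \<le> phi (Suc t)"
  by (simp add: phi_def)

lemma phi_half: "phi t / 2 + 1 \<le> phi (Suc t)"
proof (cases "t = 0")
  case True then show ?thesis by (simp add: phi_def)
next
  case False
  define u where "u = phi t"
  have u1: "u \<ge> 1" using phi_ge1[of t] False unfolding u_def by simp
  have "(u/2 + 1)^2 \<le> u^2 + 2"
  proof -
    have "0 \<le> 3 * (u - 2/3)^2 + 4/3" by simp
    then show ?thesis by (simp add: power2_eq_square algebra_simps)
  qed
  then have "u/2 + 1 \<le> sqrt (u^2 + 2)" by (rule real_le_rsqrt)
  then show ?thesis using phi_Suc_sq[of t] False unfolding u_def by simp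
qed

lemma phi_small:
  assumes "0 \<le> d" "d \<le> 1/2"
  shows "(1 - 2*d^2) * phi t + 2*d \<le> phi (Suc t)"
proof (cases "t = 0")
  case True then show ?thesis using assms by (simp add: phi_def)
next
  case False
  define u where "u = phi t"
  have u1: "u \<ge> 1" using phi_ge1[of t] False unfolding u_def by simp
  have a: "u + 1/(2*u) \<le> sqrt (u^2 + 2)"
  proof (rule real_le_rsqrt)
    have "(u + 1/(2*u))^2 = u^2 + 1 + 1/(4*u^2)" using u1
      by (simp add: power2_eq_square field_simps)
    also have "1/(4*u^2) \<le> 1" using u1
      by (simp add: power2_eq_square field_simps) (metis mult_mono' order.trans one_le_numeral zero_le_one mult_1 u1)
    finally show "(u + 1/(2*u))^2 \<le> u^2 + 2" by simp
  qed
  have b: "(1 - 2*d^2) * u + 2*d \<le> u + 1/(2*u)"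
  proof -
    have "u + 1/(2*u) - ((1 - 2*d^2) * u + 2*d) = (1 - 2*d*u)^2 / (2*u)" using u1
      by (simp add: power2_eq_square field_simps)
    also have "\<dots> \<ge> 0" using u1 by simp
    finally show ?thesis by simp
  qed
  show ?thesis using a b phi_Suc_sq[of t] False unfolding u_def by simp
qed



lemma arith_small:
  fixes p q M d :: real
  assumes "0 \<le> q" "q \<le> p" "p \<le> M" "0 < M" "d = (p - q)/M" "d \<le> 1/2"
  shows "(p+q)*(2*M-(p+q))/M \<le> (1 - 2*d^2)*(2*p*(M-p)/M) + 2*d*(p-q) + 2*q*(M-q)/M"
proof -
  have pq: "p - q = d*M" using assms by simp
  have id: "(p+q)*(2*M-(p+q)) = 2*p*(M-p) + 2*q*(M-q) + (p-q)^2"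
    by (simp add: power2_eq_square algebra_simps)
  have key: "4*p*(M-p) \<le> M^2"
  proof -
    have "0 \<le> (M - 2*p)^2" by simp
    then show ?thesis by (simp add: power2_eq_square algebra_simps)
  qed
  have d0: "0 \<le> d^2" by simp
  have "(p-q)^2 \<le> -(2*d^2)*(2*p*(M-p)) + 2*d*(p-q)*M"
  proof -
    have "(p-q)^2 = d^2*M^2" using pq by (simp add: power2_eq_square)
    moreover have "d^2 * (4*p*(M-p)) \<le> d^2 * M^2" using key d0 by (rule mult_left_mono)
    moreover have "2*d*(p-q)*M = 2*d^2*M^2" using pq by (simp add: power2_eq_square)
    ultimately show ?thesis by (simp add: algebra_simps)
  qed
  then have "(p+q)*(2*M-(p+q)) \<le> (1 - 2*d^2)*(2*p*(M-p)) + 2*d*(p-q)*M + 2*q*(M-q)"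
    using id by (simp add: algebra_simps)
  then have "(p+q)*(2*M-(p+q))/M \<le> ((1 - 2*d^2)*(2*p*(M-p)) + 2*d*(p-q)*M + 2*q*(M-q))/M"
    using assms(4) by (intro divide_right_mono) auto
  also have "\<dots> = (1 - 2*d^2)*(2*p*(M-p)/M) + 2*d*(p-q) + 2*q*(M-q)/M"
    using assms(4) by (simp add: add_divide_distrib)
  finally show ?thesis .
qed

lemma arith_big:
  fixes p q M d :: real
  assumes "0 \<le> q" "q \<le> p" "p \<le> M" "0 < M" "d = (p - q)/M" "d \<ge> 1/2"
  shows "(p+q)*(2*M-(p+q))/M \<le> (1 - 1/2)*(2*p*(M-p)/M) + 1*(p-q) + 2*q*(M-q)/M"
proof -
  have "p - q = d * M" using assms by simp
  moreover have "d * M \<ge> (1/2) * M" using assms by (intro mult_right_mono) auto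
  ultimately have pq: "2*(p - q) \<ge> M" by simp
  have id: "(p+q)*(2*M-(p+q)) = 2*p*(M-p) + 2*q*(M-q) + (p-q)^2"
    by (simp add: power2_eq_square algebra_simps)
  have "q * (M - 2*p + q) \<le> 0"
    using assms pq by (intro mult_nonneg_nonpos) auto
  then have "(p-q)^2 \<le> -(p*(M-p)) + (p-q)*M"
    by (simp add: power2_eq_square algebra_simps)
  then have "(p+q)*(2*M-(p+q)) \<le> (1 - 1/2)*(2*p*(M-p)) + 1*(p-q)*M + 2*q*(M-q)"
    using id by (simp add: algebra_simps)
  then have "(p+q)*(2*M-(p+q))/M \<le> ((1 - 1/2)*(2*p*(M-p)) + 1*(p-q)*M + 2*q*(M-q))/M"
    using assms(4) by (intro divide_right_mono) auto
  also have "\<dots> = (1 - 1/2)*(2*p*(M-p)/M) + 1*(p-q) + 2*q*(M-q)/M"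
    using assms(4) by (simp add: add_divide_distrib)
  finally show ?thesis .
qed

lemma step_lemma:
  fixes P Q :: "'a set" and f g :: "'a \<Rightarrow> nat" and M :: real
  assumes fin: "finite P" "finite Q" and le: "card Q \<le> card P" and PM: "real (card P) \<le> M" and M0: "0 < M"
    and IHP: "2 * real (card P) * (M - real (card P)) / M \<le> (\<Sum>x\<in>P. phi (f x))"
    and IHQ: "2 * real (card Q) * (M - real (card Q)) / M \<le> (\<Sum>x\<in>Q. phi (g x))"
  shows "(real (card P) + real (card Q)) * (2*M - (real (card P) + real (card Q))) / M
     \<le> (\<Sum>x\<in>P. phi (f x + (if x \<in> Q then 0 else 1))) + (\<Sum>x\<in>Q. phi (g x + (if x \<in> P then 0 else 1)))"
proof -
  define p where "p = real (card P)"
  define q where "q = real (card Q)"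
  define d where "d = (p - q)/M"
  have qp: "q \<le> p" using le unfolding p_def q_def by simp
  have cPQ: "p - q \<le> real (card (P - Q))"
  proof -
    have "card P = card (P - Q) + card (P \<inter> Q)"
      using fin by (metis Diff_Diff_Int Diff_subset card_Diff_subset_Int card_mono inf.cobounded1 le_add_diff_inverse2 card_Diff_subset finite_Diff finite_Int add.commute)
    moreover have "card (P \<inter> Q) \<le> card Q" using fin by (simp add: card_mono)
    ultimately show ?thesis unfolding p_def q_def by simp
  qed
  have Qsum: "(\<Sum>x\<in>Q. phi (g x)) \<le> (\<Sum>x\<in>Q. phi (g x + (if x \<in> P then 0 else 1)))"
    by (rule sum_mono) (simp add: phi_mono1)
  obtain lam m where lm: "0 \<le> lam" "lam \<le> 1" "0 \<le> m"
     and pt: "\<And>t. (1 - lam) * phi t + m \<le> phi (Suc t)"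
     and ar: "(p+q)*(2*M-(p+q))/M \<le> (1 - lam)*(2*p*(M-p)/M) + m*(p-q) + 2*q*(M-q)/M"
  proof (cases "d \<le> 1/2")
    case True
    have d0: "0 \<le> d" using qp M0 unfolding d_def by simp
    have "d^2 \<le> (1/2)^2" using True d0 by (intro power_mono) auto
    then have "2*d^2 \<le> 1" by (simp add: power2_eq_square)
    then show ?thesis
      using that[of "2*d^2" "2*d"] phi_small[OF d0 True] d0
        arith_small[of q p M d, OF _ qp _ M0 d_def True]
      unfolding p_def q_def by (simp add: PM)
  next
    case False
    then show ?thesis
      using that[of "1/2" 1] phi_half arith_big[of q p M d, OF _ qp _ M0 d_def] PM
      unfolding p_def q_def by (simp add: field_simps)
  qed
  have Psum: "(1 - lam) * (\<Sum>x\<in>P. phi (f x)) + m * real (card (P - Q))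
      \<le> (\<Sum>x\<in>P. phi (f x + (if x \<in> Q then 0 else 1)))"
  proof -
    have "(\<Sum>x\<in>P. (1 - lam) * phi (f x) + (if x \<in> Q then 0 else m))
        \<le> (\<Sum>x\<in>P. phi (f x + (if x \<in> Q then 0 else 1)))"
    proof (rule sum_mono)
      fix x assume "x \<in> P"
      show "(1 - lam) * phi (f x) + (if x \<in> Q then 0 else m) \<le> phi (f x + (if x \<in> Q then 0 else 1))"
      proof (cases "x \<in> Q")
        case True
        have "(1 - lam) * phi (f x) \<le> 1 * phi (f x)" using lm phi_nonneg[of "f x"]
          by (intro mult_right_mono) auto
        then show ?thesis using True by simp
      next
        case False then show ?thesis using pt[of "f x"] by simp
      qed
    qed
    moreover have "(\<Sum>x\<in>P. (1 - lam) * phi (f x) + (if x \<in> Q then 0 else m))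
       = (1 - lam) * (\<Sum>x\<in>P. phi (f x)) + m * real (card (P - Q))"
    proof -
      have "(\<Sum>x\<in>P. (if x \<in> Q then 0 else m)) = m * real (card (P - Q))"
        using fin by (simp add: sum.If_cases Diff_eq)
      then show ?thesis by (simp add: sum.distrib sum_distrib_left)
    qed
    ultimately show ?thesis by simp
  qed
  have "(1 - lam) * (2*p*(M-p)/M) \<le> (1 - lam) * (\<Sum>x\<in>P. phi (f x))"
    using IHP lm unfolding p_def by (intro mult_left_mono) auto
  moreover have "m*(p-q) \<le> m * real (card (P - Q))" using cPQ lm by (intro mult_left_mono) auto
  ultimately show ?thesis using ar Psum Qsum IHQ unfolding p_def q_def by linarith
qed



lemma KP:
  "A \<subseteq> cube n \<Longrightarrow> 2 * real (card A) * (2^n - real (card A)) / 2^n \<le> (\<Sum>x\<in>A. phi (hb n A x))"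
proof (induction n arbitrary: A)
  case 0
  have "cube 0 = {[]}" by (auto simp: cube_def)
  then have "A = {} \<or> A = {[]}" using 0 by auto
  then show ?case by (auto simp: phi_nonneg)
next
  case (Suc n)
  define A0 where "A0 = sl A False"
  define A1 where "A1 = sl A True"
  have s0: "A0 \<subseteq> cube n" "A1 \<subseteq> cube n" using sl_sub[OF Suc.prems] unfolding A0_def A1_def by auto
  have fin: "finite A0" "finite A1" using s0 finite_cube finite_subset by blast+
  have cardle: "real (card A0) \<le> 2^n" "real (card A1) \<le> 2^n"
    using s0 card_mono[OF finite_cube] card_cube by (metis of_nat_le_iff of_nat_numeral of_nat_power)+
  have IH0: "2 * real (card A0) * (2^n - real (card A0)) / 2^n \<le> (\<Sum>x\<in>A0. phi (hb n A0 x))"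
    using Suc.IH[OF s0(1)] .
  have IH1: "2 * real (card A1) * (2^n - real (card A1)) / 2^n \<le> (\<Sum>x\<in>A1. phi (hb n A1 x))"
    using Suc.IH[OF s0(2)] .
  have sumA: "(\<Sum>x\<in>A. phi (hb (Suc n) A x)) =
     (\<Sum>x\<in>A0. phi (hb n A0 x + (if x \<in> A1 then 0 else 1))) +
     (\<Sum>x\<in>A1. phi (hb n A1 x + (if x \<in> A0 then 0 else 1)))"
  proof -
    have "(\<Sum>x\<in>A. phi (hb (Suc n) A x)) = (\<Sum>x\<in>A0. phi (hb (Suc n) A (False#x))) + (\<Sum>x\<in>A1. phi (hb (Suc n) A (True#x)))"
      unfolding A0_def A1_def by (rule sum_split[OF Suc.prems])
    also have "(\<Sum>x\<in>A0. phi (hb (Suc n) A (False#x))) = (\<Sum>x\<in>A0. phi (hb n A0 x + (if x \<in> A1 then 0 else 1)))"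
      by (rule sum.cong[OF refl]) (use s0 in \<open>auto simp: hb_Cons A0_def A1_def\<close>)
    also have "(\<Sum>x\<in>A1. phi (hb (Suc n) A (True#x))) = (\<Sum>x\<in>A1. phi (hb n A1 x + (if x \<in> A0 then 0 else 1)))"
      by (rule sum.cong[OF refl]) (use s0 in \<open>auto simp: hb_Cons A0_def A1_def\<close>)
    finally show ?thesis .
  qed
  have cA: "card A = card A0 + card A1" unfolding A0_def A1_def by (rule card_split[OF Suc.prems])
  have M0: "(0::real) < 2^n" by simp
  have main: "(real (card A0) + real (card A1)) * (2*2^n - (real (card A0) + real (card A1))) / 2^n
     \<le> (\<Sum>x\<in>A. phi (hb (Suc n) A x))"
  proof (cases "card A1 \<le> card A0")
    case True
    show ?thesis unfolding sumA using step_lemma[OF fin True cardle(1) M0 IH0 IH1] .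
  next
    case False
    then have "card A0 \<le> card A1" by simp
    from step_lemma[OF fin(2) fin(1) this cardle(2) M0 IH1 IH0]
    show ?thesis unfolding sumA by (simp add: add.commute)
  qed
  have "2 * real (card A) * (2^(Suc n) - real (card A)) / 2^(Suc n)
      = (real (card A0) + real (card A1)) * (2*2^n - (real (card A0) + real (card A1))) / 2^n"
    unfolding cA by (simp add: field_simps)
  then show ?case using main by simp
qed



lemma adj_form:
  assumes "cube_adj x y"
  shows "y \<in> (\<lambda>i. x[i := \<not> x!i]) ` {..<length x}"
proof -
  have len: "length x = length y" using assms by (simp add: cube_adj_def)
  have "card {i. i < length x \<and> x!i \<noteq> y!i} = 1" using assms unfolding cube_adj_def by blast
  then obtain i where i: "{i. i < length x \<and> x!i \<noteq> y!i} = {i}" by (rule card_1_singletonE)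
  then have il: "i < length x" and ne: "x!i \<noteq> y!i" by auto
  have eq: "\<And>j. j < length x \<Longrightarrow> j \<noteq> i \<Longrightarrow> x!j = y!j" using i by blast
  have "y = x[i := \<not> x!i]"
    by (rule nth_equalityI) (use len il ne eq in \<open>auto simp: nth_list_update\<close>)
  then show ?thesis using il by auto
qed

lemma deg_le:
  assumes "x \<in> cube n"
  shows "deg_in B x \<le> n"
proof -
  have "{y \<in> B. cube_adj x y} \<subseteq> (\<lambda>i. x[i := \<not> x!i]) ` {..<length x}" using adj_form by blast
  then have "card {y \<in> B. cube_adj x y} \<le> card ((\<lambda>i. x[i := \<not> x!i]) ` {..<length x})"
    by (rule card_mono[rotated]) simp
  also have "\<dots> \<le> card {..<length x}" by (rule card_image_le) simp
  finally show ?thesis using assms by (simp add: deg_in_def cube_def)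
qed

lemma phi_le_sqrt: "t \<le> n \<Longrightarrow> phi t \<le> sqrt (2 * real n)"
  by (simp add: phi_def)

lemma indic_bound: "(if t \<noteq> 1 then 1 else 0) \<le> 7 * real t + 1 - 8 * phi t"
proof (cases "t \<ge> 2")
  case True
  have t2: "real t \<ge> 2" using True by simp
  have "2 * real t - 1 \<le> (7 * real t / 8)^2"
  proof -
    have "0 \<le> (real t - 2) * (49 * real t - 30) + 4" using t2 by simp
    then show ?thesis by (simp add: power2_eq_square algebra_simps)
  qed
  then have "sqrt (2 * real t - 1) \<le> sqrt ((7 * real t / 8)^2)" by (rule real_sqrt_le_mono)
  also have "\<dots> = 7 * real t / 8" using t2 by simp
  finally show ?thesis using True by (simp add: phi_def)
next
  case False
  then have "t = 0 \<or> t = 1" by auto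
  then show ?thesis by (auto simp: phi_def)
qed

lemma beta_bound:
  assumes "n \<ge> 1"
  shows "real n powr (- log 2 (3/2)) * sqrt (2 * real n) \<le> 2"
    and "real n powr (- log 2 (3/2)) \<le> 1"
proof -
  have b: "1/2 \<le> log 2 (3/2::real)"
  proof (subst le_log_iff)
    show "(2::real) powr (1/2) \<le> 3/2"
    proof -
      have "(2::real) powr (1/2) = sqrt 2" by (simp add: powr_half_sqrt)
      also have "sqrt 2 \<le> sqrt ((3/2)^2)" by (rule real_sqrt_le_mono) (simp add: power2_eq_square)
      finally show ?thesis by simp
    qed
  qed auto
  have n1: "1 \<le> real n" using assms by simp
  have p: "real n powr (- log 2 (3/2)) \<le> real n powr (-(1/2))"
    by (rule powr_mono) (use b n1 in auto)
  have q: "real n powr (-(1/2)) = inverse (sqrt (real n))"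
    by (simp add: powr_minus powr_half_sqrt)
  have sn: "sqrt (real n) \<ge> 1" using n1 by simp
  have "real n powr (- log 2 (3/2)) * sqrt (2 * real n) \<le> inverse (sqrt (real n)) * sqrt (2 * real n)"
    using p q by (intro mult_right_mono) auto
  also have "\<dots> = sqrt 2" using sn by (simp add: real_sqrt_mult field_simps)
  also have "sqrt 2 \<le> sqrt 4" by (rule real_sqrt_le_mono) simp
  also have "sqrt 4 = (2::real)" by (simp add: real_sqrt_eq_iff)
  finally show "real n powr (- log 2 (3/2)) * sqrt (2 * real n) \<le> 2" .
  have "inverse (sqrt (real n)) \<le> 1" using sn by (simp add: inverse_le_1_iff)
  then show "real n powr (- log 2 (3/2)) \<le> 1" using p q by simp
qed



theorem proposition3p3:
  "\<exists>K::real. K > 0 \<and>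
     (\<forall>(n::nat) (\<epsilon>::real) A B W.
        n \<ge> 2 \<longrightarrow> \<epsilon> > 0 \<longrightarrow>
        A \<union> B \<union> W = cube n \<longrightarrow> A \<inter> B = {} \<longrightarrow> A \<inter> W = {} \<longrightarrow> B \<inter> W = {} \<longrightarrow>
        (1 - \<epsilon>) / 2 \<le> mu n A \<longrightarrow> mu n A \<le> (1 + \<epsilon>) / 2 \<longrightarrow>
        mu n W \<le> \<epsilon> * real n powr (- log 2 (3 / 2)) \<longrightarrow>
        real (card (edge_boundary A B)) < (1 + \<epsilon>) * 2 ^ (n - 1) \<longrightarrow>
        real (card {x \<in> A. h_AB A B x \<noteq> 1}) \<le> K * \<epsilon> * real (card A))"
proof (rule exI[of _ 108], intro conjI allI impI)
  fix n :: nat and \<epsilon> :: real and A B W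
  assume n2: "n \<ge> 2" and e0: "\<epsilon> > 0" and part: "A \<union> B \<union> W = cube n"
    and dAB: "A \<inter> B = {}" and dAW: "A \<inter> W = {}" and dBW: "B \<inter> W = {}"
    and muA1: "(1 - \<epsilon>) / 2 \<le> mu n A" and muA2: "mu n A \<le> (1 + \<epsilon>) / 2"
    and muW: "mu n W \<le> \<epsilon> * real n powr (- log 2 (3 / 2))"
    and Eb: "real (card (edge_boundary A B)) < (1 + \<epsilon>) * 2 ^ (n - 1)"
  define N :: real where "N = 2^n"
  have N0: "N > 0" unfolding N_def by simp
  have subs: "A \<subseteq> cube n" "B \<subseteq> cube n" "W \<subseteq> cube n" using part by auto
  have fin: "finite A" "finite B" "finite W" using subs finite_cube finite_subset by blast+
  define a where "a = real (card A)"
  define b where "b = real (card B)"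
  define w where "w = real (card W)"
  have sumN: "a + b + w = N"
  proof -
    have "card (A \<union> B \<union> W) = card (A \<union> B) + card W"
      using fin dAW dBW by (intro card_Un_disjoint) auto
    also have "card (A \<union> B) = card A + card B" using fin dAB by (intro card_Un_disjoint) auto
    finally have "card A + card B + card W = 2^n" using part card_cube by simp
    then show ?thesis unfolding a_def b_def w_def N_def by (metis of_nat_add of_nat_numeral of_nat_power)
  qed
  have a1: "(1 - \<epsilon>) * N / 2 \<le> a" using muA1 N0 unfolding mu_def a_def N_def by (simp add: field_simps)
  have a2: "a \<le> (1 + \<epsilon>) * N / 2" using muA2 N0 unfolding mu_def a_def N_def by (simp add: field_simps)
  define np where "np = real n powr (- log 2 (3 / 2))"
  have w1: "w \<le> \<epsilon> * np * N" using muW N0 unfolding mu_def w_def N_def np_def by (simp add: field_simps)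
  have nb: "np * sqrt (2 * real n) \<le> 2" "np \<le> 1" using beta_bound[of n] n2 unfolding np_def by auto
  have np0: "np \<ge> 0" unfolding np_def by simp
  have halfN: "(2::real) ^ (n - 1) = N / 2"
  proof -
    have "(2::real)^n = 2 * 2^(n-1)" using n2 by (metis Suc_diff_1 le_trans one_le_numeral not_one_le_zero power_Suc zero_less_iff_neq_zero le0 less_le_trans one_less_numeral_iff semiring_norm(76) linorder_not_less)
    then show ?thesis unfolding N_def by simp
  qed
  define E where "E = real (card (edge_boundary A B))"
  have E1: "E < (1 + \<epsilon>) * N / 2"
  proof -
    have "(1 + \<epsilon>) * (2::real) ^ (n - 1) = (1 + \<epsilon>) * N / 2" using halfN by simp
    then show ?thesis using Eb unfolding E_def by linarith
  qed
  have Esum: "E = (\<Sum>x\<in>A. real (deg_in B x))"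
  proof -
    have "edge_boundary A B = (SIGMA x:A. {y \<in> B. cube_adj x y})"
      unfolding edge_boundary_def by auto
    then have "card (edge_boundary A B) = (\<Sum>x\<in>A. card {y \<in> B. cube_adj x y})"
      using fin by simp
    then show ?thesis unfolding E_def deg_in_def by simp
  qed
  have cardle: "real (card {x \<in> A. h_AB A B x \<noteq> 1}) \<le> a"
    unfolding a_def using fin by (simp add: card_mono)
  show "real (card {x \<in> A. h_AB A B x \<noteq> 1}) \<le> 108 * \<epsilon> * real (card A)"
  proof (cases "\<epsilon> > 1/3")
    case True
    have "a \<le> 108 * \<epsilon> * a"
    proof -
      have "1 * a \<le> (108 * \<epsilon>) * a" using True unfolding a_def by (intro mult_right_mono) auto
      then show ?thesis by simp
    qed
    then show ?thesis using cardle unfolding a_def by simp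
  next
    case False
    then have e3: "\<epsilon> \<le> 1/3" by simp
    define S where "S = A \<union> W"
    have Ssub: "S \<subseteq> cube n" using subs unfolding S_def by auto
    have cS: "real (card S) = a + w" unfolding S_def a_def w_def using fin dAW
      by (simp add: card_Un_disjoint)
    have hbS: "hb n S x = deg_in B x" for x
    proof -
      have "cube n - S = B" using part dAB dBW unfolding S_def by auto
      then show ?thesis unfolding hb_def deg_in_def by simp
    qed
    have KPS: "2 * (a + w) * (N - (a + w)) / N \<le> (\<Sum>x\<in>S. phi (deg_in B x))"
      using KP[OF Ssub] cS hbS unfolding N_def by simp
    have splitS: "(\<Sum>x\<in>S. phi (deg_in B x)) = (\<Sum>x\<in>A. phi (deg_in B x)) + (\<Sum>x\<in>W. phi (deg_in B x))"
      unfolding S_def using fin dAW by (simp add: sum.union_disjoint)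
    have Wsum: "(\<Sum>x\<in>W. phi (deg_in B x)) \<le> w * sqrt (2 * real n)"
    proof -
      have "(\<Sum>x\<in>W. phi (deg_in B x)) \<le> (\<Sum>x\<in>W. sqrt (2 * real n))"
        by (rule sum_mono, rule phi_le_sqrt, rule deg_le) (use subs in auto)
      then show ?thesis unfolding w_def by simp
    qed
    have Wb: "w * sqrt (2 * real n) \<le> 2 * \<epsilon> * N"
    proof -
      have "w * sqrt (2 * real n) \<le> (\<epsilon> * np * N) * sqrt (2 * real n)"
        using w1 by (intro mult_right_mono) auto
      also have "\<dots> = (\<epsilon> * N) * (np * sqrt (2 * real n))" by (simp add: algebra_simps)
      also have "\<dots> \<le> (\<epsilon> * N) * 2" using nb e0 N0 by (intro mult_left_mono) auto
      finally show ?thesis by simp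
    qed
    have w2: "w \<le> \<epsilon> * N"
    proof -
      have "\<epsilon> * np * N \<le> \<epsilon> * 1 * N" using nb e0 N0 by (intro mult_right_mono mult_left_mono) auto
      then show ?thesis using w1 by simp
    qed
    have w0: "w \<ge> 0" unfolding w_def by simp
    have prod: "(1 - 4*\<epsilon>) * N / 2 \<le> 2 * (a + w) * (N - (a + w)) / N"
    proof -
      have u: "(1 - \<epsilon>) * N / 2 \<le> a + w" using a1 w0 by simp
      have v: "(1 - 3*\<epsilon>) * N / 2 \<le> N - (a + w)" using a2 w2 by (simp add: field_simps)
      have u0: "0 \<le> (1 - \<epsilon>) * N / 2" using e3 N0 by simp
      have v0: "0 \<le> (1 - 3*\<epsilon>) * N / 2" using e3 N0 by simp
      have XY: "((1 - \<epsilon>) * N / 2) * ((1 - 3*\<epsilon>) * N / 2) \<le> (a + w) * (N - (a + w))"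
        by (rule mult_mono[OF u v]) (use u u0 v0 in linarith)+
      have f1: "2 * (((1 - \<epsilon>) * N / 2) * ((1 - 3*\<epsilon>) * N / 2)) / N \<le> 2 * ((a + w) * (N - (a + w))) / N"
        by (rule divide_right_mono[OF mult_left_mono[OF XY]]) (use N0 in auto)
      have f2: "2 * (((1 - \<epsilon>) * N / 2) * ((1 - 3*\<epsilon>) * N / 2)) / N = (1 - \<epsilon>) * (1 - 3*\<epsilon>) * N / 2"
        using N0 by (simp add: field_simps)
      have f3: "(1 - 4*\<epsilon>) * N / 2 \<le> (1 - \<epsilon>) * (1 - 3*\<epsilon>) * N / 2"
      proof -
        have "(1 - 4*\<epsilon>) \<le> (1 - \<epsilon>) * (1 - 3*\<epsilon>)" by (simp add: algebra_simps)
        then show ?thesis using N0 by (intro divide_right_mono mult_right_mono) auto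
      qed
      have f4: "2 * (a + w) * (N - (a + w)) / N = 2 * ((a + w) * (N - (a + w))) / N" by simp
      show ?thesis using f1 f2 f3 f4 by linarith
    qed
    have cnt: "real (card {x \<in> A. h_AB A B x \<noteq> 1}) \<le> 7 * E + a - 8 * (\<Sum>x\<in>A. phi (deg_in B x))"
    proof -
      have "real (card {x \<in> A. h_AB A B x \<noteq> 1}) = (\<Sum>x\<in>A. (if deg_in B x \<noteq> 1 then 1 else 0))"
      proof -
        have "{x \<in> A. h_AB A B x \<noteq> 1} = {x \<in> A. deg_in B x \<noteq> 1}" by (auto simp: h_AB_def)
        moreover have "(\<Sum>x\<in>A. (if deg_in B x \<noteq> 1 then 1 else 0)) = real (card {x \<in> A. deg_in B x \<noteq> 1})"
          using fin by (simp add: sum.If_cases Int_def)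
        ultimately show ?thesis by simp
      qed
      also have "\<dots> \<le> (\<Sum>x\<in>A. 7 * real (deg_in B x) + 1 - 8 * phi (deg_in B x))"
        by (rule sum_mono) (rule indic_bound)
      also have "\<dots> = 7 * E + a - 8 * (\<Sum>x\<in>A. phi (deg_in B x))"
        unfolding Esum a_def by (simp add: sum.distrib sum_subtractf sum_distrib_left)
      finally show ?thesis .
    qed
    have "real (card {x \<in> A. h_AB A B x \<noteq> 1}) \<le> 36 * \<epsilon> * N"
    proof -
      define P where "P = \<epsilon> * N"
      have r1: "(1 + \<epsilon>) * N / 2 = N/2 + P/2" unfolding P_def by (simp add: field_simps)
      have r2: "(1 - 4*\<epsilon>) * N / 2 = N/2 - 2*P" unfolding P_def by (simp add: field_simps)
      have r3: "2 * \<epsilon> * N = 2 * P" "36 * \<epsilon> * N = 36 * P" unfolding P_def by simp_all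
      show ?thesis using cnt E1 a2 KPS splitS Wsum Wb prod unfolding r1 r2 r3 by linarith
    qed
    also have "36 * \<epsilon> * N \<le> 108 * \<epsilon> * a"
    proof -
      have x1: "N * \<epsilon> \<le> N * (1/3)" using e3 N0 by (intro mult_left_mono) auto
      have x2: "N - N * \<epsilon> \<le> 2 * a" using a1 by (simp add: field_simps)
      have "N \<le> 3 * a" using x1 x2 by linarith
      then show ?thesis using e0 by simp
    qed
    finally show ?thesis unfolding a_def .
  qed
qed simp


end
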